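(* Let $n$ be a nonnegative integer and $a,b\in\mathbb{C}$ such that all expressions below are defined (no lower parameter zero or a negative integer). Then \[ \left[{}_3F_2\!\left(\left.{\frac{a}{2},\frac{a+1}{2},b \atop a,1+a+n}\right| 4\right)\right]_n =\frac{(b)_n}{n!}\,{}_4F_3\!\left(\left.{-n,\frac{1+a-b}{2},\frac{2+a-b}{2},1 \atop 1+a-b,1-b-n,1+a+n}\right| 4\right). \]
   Context: For $a\in\mathbb{C}$, $(a)_0=1$ and $(a)_k=a(a+1)\cdots(a+k-1)$ for $k\ge1$. The hypergeometric series is ${}_rF_s\!\left(\left.{\alpha_1,\ldots,\alpha_r\atop \beta_1,\ldots,\beta_s}\right|z\right)=\sum_{k\ge0}\frac{(\alpha_1)_k\cdots(\alpha_r)_k}{k!(\beta_1)_k\cdots(\beta_s)_k}z^k$, with no lower parameter zero or a negative integer; it is a finite sum when an upper parameter is $-n$. The bracket $\left[{}_rF_s\!\left(\left.{\alpha_1,\ldots,\alpha_r\atop \beta_1,\ldots,\beta_s}\right|z\right)\right]_n$ denotes the sum of the first $n+1$ terms, $\sum_{k=0}^{n}\frac{(\alpha_1)_k\cdots(\alpha_r)_k}{k!(\beta_1)_k\cdots(\beta_s)_k}z^k$. *)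

theory Defs
  imports Complex_Main "HOL-Library.Nonpos_Ints"
begin

definition hyp_term :: "complex list \<Rightarrow> complex list \<Rightarrow> complex \<Rightarrow> nat \<Rightarrow> complex" where
  "hyp_term as bs z k =
     (\<Prod>a\<leftarrow>as. pochhammer a k) / (fact k * (\<Prod>b\<leftarrow>bs. pochhammer b k)) * z ^ k"

definition hypF :: "complex list \<Rightarrow> complex list \<Rightarrow> complex \<Rightarrow> complex" where
  "hypF as bs z = (\<Sum>k. hyp_term as bs z k)"

definition hypF_trunc :: "complex list \<Rightarrow> complex list \<Rightarrow> complex \<Rightarrow> nat \<Rightarrow> complex" where
  "hypF_trunc as bs z n = (\<Sum>k\<le>n. hyp_term as bs z k)"

end

theory Submission imports Defs "HOL-Computational_Algebra.Formal_Power_Series" begin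

lemma poch_nz:
  fixes x :: complex
  assumes "x \<notin> \<int>\<^sub>\<le>\<^sub>0"
  shows "pochhammer x k \<noteq> 0"
  using assms by (auto simp: pochhammer_eq_0_iff)

lemma poch_nz_shift:
  fixes x :: complex
  assumes "x \<notin> \<int>\<^sub>\<le>\<^sub>0"
  shows "pochhammer (x + of_nat i) k \<noteq> 0"
  using poch_nz[OF assms, of "i+k"] pochhammer_product'[of x i k] by auto

lemma lhs_term:
  fixes a b c :: complex
  assumes "a \<notin> \<int>\<^sub>\<le>\<^sub>0"
  shows "hyp_term [a/2, (a+1)/2, b] [a, c] 4 k = pochhammer b k / fact k * (pochhammer (a + of_nat k) k / pochhammer c k)"
proof -
  have d: "pochhammer a (2*k) = of_nat (2^(2*k)) * pochhammer (a/2) k * pochhammer ((a+1)/2) k"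
    using pochhammer_double[of "a/2" k] by (simp add: add_divide_distrib)
  have p: "pochhammer a (2*k) = pochhammer a k * pochhammer (a + of_nat k) k"
    using pochhammer_product'[of a k k] by (simp add: mult_2)
  have nz: "pochhammer a k \<noteq> 0"
    using poch_nz[OF assms] .
  have f4: "(4::complex)^k = of_nat (2^(2*k))"
    by (simp add: power_mult)
  have "hyp_term [a/2, (a+1)/2, b] [a, c] 4 k
      = pochhammer (a/2) k * pochhammer ((a+1)/2) k * 4^k * pochhammer b k / (fact k * pochhammer a k * pochhammer c k)"
    by (simp add: hyp_term_def mult_ac)
  also have "\<dots> = pochhammer a k * pochhammer (a + of_nat k) k * pochhammer b k / (fact k * pochhammer a k * pochhammer c k)"
    using d p f4 by (simp add: mult_ac)
  also have "\<dots> = pochhammer b k / fact k * (pochhammer (a + of_nat k) k / pochhammer c k)"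
    using nz by (simp add: field_simps)
  finally show ?thesis .
qed

lemma rhs_zero:
  fixes n j :: nat
  assumes "j > n"
  shows "hyp_term (- of_nat n # xs) ys z j = 0"
  using assms by (simp add: hyp_term_def pochhammer_of_nat_eq_0_iff)

lemma rhs_term:
  fixes a b :: complex and n j :: nat
  assumes "j \<le> n"
    and A: "1 + a - b \<notin> \<int>\<^sub>\<le>\<^sub>0"
    and B: "1 - b - of_nat n \<notin> \<int>\<^sub>\<le>\<^sub>0"
  shows "pochhammer b n / fact n * hyp_term [- of_nat n, (1 + a - b) / 2, (2 + a - b) / 2, 1]
              [1 + a - b, 1 - b - of_nat n, c] 4 j
      = pochhammer b (n-j) / fact (n-j) * (pochhammer (1 + a - b + of_nat j) j / pochhammer c j)"
proof -
  have d: "pochhammer (1+a-b) (2*j) = of_nat (2^(2*j)) * pochhammer ((1+a-b)/2) j * pochhammer ((2+a-b)/2) j"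
  proof -
    have e1: "2*((1+a-b)/2) = (1+a-b::complex)" by simp
    have e2: "(1+a-b)/2 + 1/2 = (2+a-b)/(2::complex)" by (simp add: field_simps)
    show ?thesis using pochhammer_double[of "(1+a-b)/2" j] by (simp only: e1 e2)
  qed
  have p: "pochhammer (1+a-b) (2*j) = pochhammer (1+a-b) j * pochhammer (1 + a - b + of_nat j) j"
    using pochhammer_product'[of "1+a-b" j j] by (simp add: mult_2)
  have f4: "(4::complex)^j = of_nat (2^(2*j))"
    by (simp add: power_mult)
  have nz1: "pochhammer (1+a-b) j \<noteq> 0" using poch_nz[OF A] .
  have nfact: "pochhammer (- of_nat n :: complex) j = (-1)^j * fact n / fact (n-j)"
  proof -
    have "pochhammer (- of_nat n :: complex) j = (-1)^j * pochhammer (of_nat n - of_nat j + 1) j"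
      by (rule pochhammer_minus)
    moreover have "fact n = (fact (n-j) :: complex) * pochhammer (of_nat n - of_nat j + 1) j"
      using pochhammer_product[of "n-j" n "1::complex"] assms(1)
      by (simp add: pochhammer_fact of_nat_diff algebra_simps)
    ultimately show ?thesis by (simp add: field_simps)
  qed
  have pb: "pochhammer b n = pochhammer b (n-j) * pochhammer (b + of_nat n - of_nat j) j"
    using pochhammer_product[of "n-j" n b] assms(1) by (simp add: of_nat_diff add_diff_eq)
  have pm: "pochhammer (1 - b - of_nat n) j = (-1)^j * pochhammer (b + of_nat n - of_nat j) j"
    using pochhammer_minus[of "b + of_nat n - 1" j] by (simp add: algebra_simps)
  have nz2: "pochhammer (b + of_nat n - of_nat j) j \<noteq> 0"
    using poch_nz[OF B, of j] pm by auto
  have "pochhammer b n / fact n * hyp_term [- of_nat n, (1 + a - b) / 2, (2 + a - b) / 2, 1]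
              [1 + a - b, 1 - b - of_nat n, c] 4 j
      = pochhammer b n / fact n * (pochhammer (- of_nat n) j * (pochhammer ((1+a-b)/2) j * pochhammer ((2+a-b)/2) j * 4^j) * pochhammer 1 j
         / (fact j * pochhammer (1+a-b) j * pochhammer (1 - b - of_nat n) j * pochhammer c j))"
    by (simp add: hyp_term_def mult_ac)
  also have "\<dots> = pochhammer b n / fact n * (pochhammer (- of_nat n) j * (pochhammer (1+a-b) j * pochhammer (1 + a - b + of_nat j) j)
         / (pochhammer (1+a-b) j * pochhammer (1 - b - of_nat n) j * pochhammer c j))"
    using d p f4 by (simp add: pochhammer_fact[symmetric] mult_ac)
  also have "\<dots> = pochhammer b (n-j) / fact (n-j) * (pochhammer (1 + a - b + of_nat j) j / pochhammer c j)"
    unfolding nfact pb pm using nz1 nz2 by (simp add: field_simps)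
  finally show ?thesis .
qed

lemma vandL:
  fixes a :: complex and n k :: nat
  assumes "k \<le> n" and C: "1 + a + of_nat n \<notin> \<int>\<^sub>\<le>\<^sub>0"
  shows "pochhammer (a + of_nat k) k / pochhammer (1 + a + of_nat n) k
     = (\<Sum>l\<le>k. pochhammer (of_nat (n-k) + 1) l * pochhammer (- of_nat k) l / (fact l * pochhammer (1 + a + of_nat n) l))"
proof -
  have c: "\<forall>i\<in>{0..<k}. 1 + a + of_nat n \<noteq> - of_nat i"
    using C by (metis minus_of_nat_in_nonpos_Ints)
  have "(\<Sum>l\<in>{0..k}. pochhammer (of_nat (n-k) + 1) l * pochhammer (- of_nat k) l / (of_nat (fact l) * pochhammer (1 + a + of_nat n) l))
     = pochhammer (1 + a + of_nat n - (of_nat (n-k) + 1)) k / pochhammer (1 + a + of_nat n) k"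
    by (rule Vandermonde_pochhammer[OF c])
  moreover have "1 + a + of_nat n - (of_nat (n-k) + 1) = a + (of_nat k :: complex)"
    using assms(1) by (simp add: of_nat_diff)
  ultimately show ?thesis by (simp add: atLeast0AtMost)
qed

lemma vandR:
  fixes a b :: complex and n j :: nat
  assumes "j \<le> n"
  shows "pochhammer (1 + a - b + of_nat j) j
     = (\<Sum>i\<le>j. (-1)^j * (of_nat (j choose i) * pochhammer (b + of_nat (n-j)) i * pochhammer (- a - of_nat n - of_nat j) (j-i)))"
proof -
  have "pochhammer (1 + a - b + of_nat j) j = (-1)^j * pochhammer (- (a - b + 2 * of_nat j)) j"
    using pochhammer_minus[of "a - b + 2 * of_nat j" j] by (simp add: algebra_simps)
  also have "- (a - b + 2 * of_nat j) = (b + of_nat (n-j)) + (- a - of_nat n - of_nat j)"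
    using assms by (simp add: of_nat_diff algebra_simps)
  finally show ?thesis
    by (simp add: pochhammer_binomial_sum sum_distrib_left)
qed

lemma poch_nat_nz: "pochhammer (of_nat p + 1) l \<noteq> (0::complex)"
proof
  assume "pochhammer (of_nat p + 1) l = (0::complex)"
  then obtain k where "(of_nat p + 1 :: complex) = - of_nat k" by (auto simp: pochhammer_eq_0_iff)
  then have "(of_nat (p + 1 + k) :: complex) = 0" by (simp add: algebra_simps eq_neg_iff_add_eq_0)
  then show False by (simp only: of_nat_eq_0_iff)
qed

lemma pointwise0:
  fixes a b :: complex and l p m :: nat
  assumes C: "1 + a + of_nat (l+p+m) \<notin> \<int>\<^sub>\<le>\<^sub>0"
  shows "pochhammer b (l+p) / fact (l+p) * (pochhammer (of_nat m + 1) l * pochhammer (- of_nat (l+p)) l / (fact l * pochhammer (1 + a + of_nat (l+p+m)) l))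
   = pochhammer b p / fact p * ((-1)^(l+m) * (of_nat ((l+m) choose l) * pochhammer (b + of_nat p) l * pochhammer (- a - of_nat (l+p+m) - of_nat (l+m)) m) / pochhammer (1 + a + of_nat (l+p+m)) (l+m))"
proof -
  define c where "c = 1 + a + of_nat (l+p+m)"
  have pb: "pochhammer b (l+p) = pochhammer b p * pochhammer (b + of_nat p) l"
    using pochhammer_product'[of b p l] by (simp add: add.commute)
  have fp: "fact (l+p) = (fact p :: complex) * pochhammer (of_nat p + 1) l"
    using pochhammer_product'[of 1 p l] by (simp add: pochhammer_fact add.commute add_ac)
  have pm1: "pochhammer (- of_nat (l+p)) l = (-1)^l * (pochhammer (of_nat p + 1) l :: complex)"
    using pochhammer_minus[of "of_nat (l+p) :: complex" l] by (simp add: algebra_simps)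
  have fm: "fact (l+m) = (fact m :: complex) * pochhammer (of_nat m + 1) l"
    using pochhammer_product'[of 1 m l] by (simp add: pochhammer_fact add.commute add_ac)
  have ch: "(of_nat ((l+m) choose l) :: complex) = fact (l+m) / (fact l * fact m)"
    by (simp add: binomial_fact)
  have pm2: "pochhammer (- a - of_nat (l+p+m) - of_nat (l+m)) m = (-1)^m * pochhammer (c + of_nat l) m"
    using pochhammer_minus[of "a + of_nat (l+p+m) + of_nat (l+m)" m] by (simp add: c_def algebra_simps)
  have pc: "pochhammer c (l+m) = pochhammer c l * pochhammer (c + of_nat l) m"
    by (rule pochhammer_product')
  have nz1: "pochhammer c l \<noteq> 0" using poch_nz[OF C, of l] unfolding c_def .
  have nz2: "pochhammer (c + of_nat l) m \<noteq> 0" using poch_nz_shift[OF C, of l m] unfolding c_def .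
  have nz3: "pochhammer (of_nat p + 1) l \<noteq> (0::complex)" by (rule poch_nat_nz)
  have nz4: "pochhammer (of_nat m + 1) l \<noteq> (0::complex)" by (rule poch_nat_nz)
  have sg: "(-1::complex)^(l+m) * (-1)^m = (-1)^l"
    by (simp add: power_add mult.assoc flip: power_add) (simp add: power_add)
  show ?thesis
    unfolding c_def[symmetric] pb fp pm1 ch fm pm2 pc
    using nz1 nz2 nz3 nz4 sg by (simp add: field_simps)
qed

theorem mainTheorem10:
  fixes n :: nat and a b :: complex
  assumes "a \<notin> \<int>\<^sub>\<le>\<^sub>0"
    and "1 + a + of_nat n \<notin> \<int>\<^sub>\<le>\<^sub>0"
    and "1 + a - b \<notin> \<int>\<^sub>\<le>\<^sub>0"
    and "1 - b - of_nat n \<notin> \<int>\<^sub>\<le>\<^sub>0"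
  shows "hypF_trunc [a / 2, (a + 1) / 2, b] [a, 1 + a + of_nat n] 4 n
       = pochhammer b n / fact n *
         hypF [- of_nat n, (1 + a - b) / 2, (2 + a - b) / 2, 1]
              [1 + a - b, 1 - b - of_nat n, 1 + a + of_nat n] 4"
proof -
  define c where "c = 1 + a + of_nat n"
  define F where "F k l = pochhammer b k / fact k * (pochhammer (of_nat (n-k) + 1) l * pochhammer (- of_nat k) l / (fact l * pochhammer c l))" for k l
  define G where "G j i = pochhammer b (n-j) / fact (n-j) * ((-1)^j * (of_nat (j choose i) * pochhammer (b + of_nat (n-j)) i * pochhammer (- a - of_nat n - of_nat j) (j-i)) / pochhammer c j)" for j i
  have L: "hypF_trunc [a / 2, (a + 1) / 2, b] [a, c] 4 n = (\<Sum>k\<le>n. \<Sum>l\<le>k. F k l)"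
    unfolding hypF_trunc_def
  proof (rule sum.cong[OF refl])
    fix k assume "k \<in> {..n}"
    then have k: "k \<le> n" by simp
    show "hyp_term [a / 2, (a + 1) / 2, b] [a, c] 4 k = (\<Sum>l\<le>k. F k l)"
      unfolding lhs_term[OF assms(1)] c_def vandL[OF k assms(2)] F_def
      by (simp add: sum_distrib_left)
  qed
  have fin: "hypF [- of_nat n, (1 + a - b) / 2, (2 + a - b) / 2, 1] [1 + a - b, 1 - b - of_nat n, c] 4
     = (\<Sum>j\<le>n. hyp_term [- of_nat n, (1 + a - b) / 2, (2 + a - b) / 2, 1] [1 + a - b, 1 - b - of_nat n, c] 4 j)"
    unfolding hypF_def by (rule suminf_finite) (auto intro: rhs_zero)
  have R: "pochhammer b n / fact n * hypF [- of_nat n, (1 + a - b) / 2, (2 + a - b) / 2, 1] [1 + a - b, 1 - b - of_nat n, c] 4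
     = (\<Sum>j\<le>n. \<Sum>i\<le>j. G j i)"
    unfolding fin sum_distrib_left
  proof (rule sum.cong[OF refl])
    fix j assume "j \<in> {..n}"
    then have j: "j \<le> n" by simp
    show "pochhammer b n / fact n * hyp_term [- of_nat n, (1 + a - b) / 2, (2 + a - b) / 2, 1] [1 + a - b, 1 - b - of_nat n, c] 4 j = (\<Sum>i\<le>j. G j i)"
      unfolding rhs_term[OF j assms(3) assms(4)] vandR[OF j, of a b] G_def
      by (simp add: sum_distrib_left sum_divide_distrib)
  qed
  have PW: "G (n+l-k) l = F k l" if "l \<le> k" "k \<le> n" for k l
  proof -
    have e: "n + l - k = n - k + l" using that by simp
    define p where "p = k - l"
    define m where "m = n - k"
    have hk: "k = l + p" and hn: "n = l + p + m" using that by (auto simp: p_def m_def)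
    show ?thesis
      using pointwise0[of a l p m b] assms(2) unfolding e F_def G_def c_def hn hk
      by (simp add: add_ac)
  qed
  have S: "(\<Sum>k\<le>n. \<Sum>l\<le>k. F k l) = (\<Sum>j\<le>n. \<Sum>i\<le>j. G j i)"
  proof -
    have "(\<Sum>k\<le>n. \<Sum>l\<le>k. F k l) = (\<Sum>(k,l)\<in>Sigma {..n} (\<lambda>k. {..k}). F k l)"
      by (rule sum.Sigma) auto
    also have "\<dots> = (\<Sum>(j,i)\<in>Sigma {..n} (\<lambda>j. {..j}). G j i)"
      by (rule sum.reindex_bij_witness[where i = "\<lambda>(j,i). (n-j+i, i)" and j = "\<lambda>(k,l). (n-k+l, l)"])
         (auto simp: PW)
    also have "\<dots> = (\<Sum>j\<le>n. \<Sum>i\<le>j. G j i)"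
      by (rule sum.Sigma[symmetric]) auto
    finally show ?thesis .
  qed
  show ?thesis using L R S unfolding c_def by simp
qed

end
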